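(* Let $n,m\ge 1$ be integers and let $\pi$ be a probability distribution on a parameter space of vectors $\theta$. For each $i=1,\ldots,n$ and each $\theta$, let $A_i(\theta)$ be a well-defined $m\times m$ nonnegative definite matrix. For $w=(w_1,\ldots,w_n)$ put $M(w,\theta)=\sum_{i=1}^n w_i A_i(\theta)$, and define $$\phi(w)=\int \log\det M(w,\theta)\,\mathrm{d}\pi(\theta),\qquad d_i(w)=\int \operatorname{tr}\big(M^{-1}(w,\theta)A_i(\theta)\big)\,\mathrm{d}\pi(\theta),\quad i=1,\ldots,n.$$ Let $\Omega=\{w\in\mathbb{R}^n:\ \sum_{i=1}^n w_i=1,\ w_i>0 \text{ for all } i\}$. Assume $\phi(w)$ is finite for at least one $w\in\Omega$. Let $w^{(t)},w^{(t+1)}\in\Omega$ and a real number $\alpha^{(t)}$ satisfy $$w_i^{(t+1)}=w_i^{(t)}\,\frac{d_i\big(w^{(t)}\big)-\alpha^{(t)}}{m-\alpha^{(t)}},\quad i=1,\ldots,n,\qquad\text{where}\qquad \alpha^{(t)}\le \frac12\min_{1\le i\le n} d_i\big(w^{(t)}\big).$$ Then $\phi\big(w^{(t+1)}\big)\ge\phi\big(w^{(t)}\big)$, with equality only if $w^{(t+1)}=w^{(t)}$.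
   Context: $\phi$ is the Bayesian D-optimality criterion for an approximate design with weights $w_i$ on a finite design space $\{x_1,\ldots,x_n\}$, where $A_i(\theta)$ is the Fisher information matrix for the $m$-dimensional parameter $\theta$ from one unit at design point $x_i$. $M^{-1}$ denotes the matrix inverse. *)

theory Defs
  imports "HOL-Analysis.Analysis" "HOL-Probability.Probability"
begin

definition nonneg_def_mat :: "real^'m^'m \<Rightarrow> bool" where
  "nonneg_def_mat B \<longleftrightarrow> transpose B = B \<and> (\<forall>x. 0 \<le> x \<bullet> (B *v x))"

definition Mmat :: "('n::finite \<Rightarrow> 'p \<Rightarrow> real^'m^'m) \<Rightarrow> real^'n \<Rightarrow> 'p \<Rightarrow> real^'m^'m" where
  "Mmat A w \<theta> = (\<Sum>i\<in>UNIV. (w $ i) *\<^sub>R A i \<theta>)"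

definition phi :: "'p measure \<Rightarrow> ('n::finite \<Rightarrow> 'p \<Rightarrow> real^'m^'m) \<Rightarrow> real^'n \<Rightarrow> real" where
  "phi \<pi> A w = (\<integral>\<theta>. ln (det (Mmat A w \<theta>)) \<partial>\<pi>)"

definition dfun :: "'p measure \<Rightarrow> ('n::finite \<Rightarrow> 'p \<Rightarrow> real^'m^'m) \<Rightarrow> real^'n \<Rightarrow> 'n \<Rightarrow> real" where
  "dfun \<pi> A w i = (\<integral>\<theta>. trace (matrix_inv (Mmat A w \<theta>) ** A i \<theta>) \<partial>\<pi>)"

definition Omega :: "(real^'n::finite) set" where
  "Omega = {w. (\<Sum>i\<in>UNIV. w $ i) = 1 \<and> (\<forall>i. 0 < w $ i)}"

text \<open>phi(w) finite: log det M(w,.) is a.s. well defined (det > 0) and integrable.\<close>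
definition phi_finite :: "'p measure \<Rightarrow> ('n::finite \<Rightarrow> 'p \<Rightarrow> real^'m^'m) \<Rightarrow> real^'n \<Rightarrow> bool" where
  "phi_finite \<pi> A w \<longleftrightarrow> (AE \<theta> in \<pi>. 0 < det (Mmat A w \<theta>)) \<and>
      integrable \<pi> (\<lambda>\<theta>. ln (det (Mmat A w \<theta>)))"

end

theory Submission
  imports Defs
begin


lemma sym_inner:
  fixes S :: "real^'m^'m"
  assumes "transpose S = S"
  shows "x \<bullet> (S *v y) = (S *v x) \<bullet> y"
proof -
  have "x \<bullet> (S *v y) = (x v* S) \<bullet> y" by (simp add: dot_lmul_matrix)
  also have "x v* S = S *v x" by (metis assms vector_transpose_matrix)
  finally show ?thesis .
qed

lemma quad_zero:
  fixes c a :: real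
  assumes "\<And>t. 2*t*c + t^2 * a \<le> 0"
  shows "c = 0"
proof -
  define b where "b = \<bar>a\<bar> + 1"
  have b: "b > 0" "2*b + a > 0" unfolding b_def by (auto simp: abs_if)
  define t where "t = c / b"
  have "2*t*c + t^2*a \<le> 0" by (rule assms)
  also have "2*t*c + t^2*a = c^2 * (2*b + a) / b^2"
    unfolding t_def using b by (simp add: field_simps power2_eq_square)
  finally have "c^2 * (2*b + a) \<le> 0" using b
    by (simp add: divide_le_0_iff)
  hence "c^2 \<le> 0" using b by (simp add: mult_le_0_iff)
  thus ?thesis by simp
qed

lemma eig_step:
  fixes S :: "real^'m^'m" and E :: "(real^'m) set"
  assumes sym: "transpose S = S" and fin: "finite E" and card: "card E < CARD('m)"
    and eig: "\<And>e. e \<in> E \<Longrightarrow> \<exists>l. S *v e = l *\<^sub>R e"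
  shows "\<exists>v. v \<bullet> v = 1 \<and> (\<forall>e\<in>E. v \<bullet> e = 0) \<and> (\<exists>l. S *v v = l *\<^sub>R v)"
proof -
  define W where "W = {x::real^'m. \<forall>e\<in>E. x \<bullet> e = 0}"
  define K where "K = W \<inter> sphere 0 1"
  define f where "f = (\<lambda>x::real^'m. x \<bullet> (S *v x))"
  have Wsub: "x + y \<in> W" "c *\<^sub>R x \<in> W" if "x \<in> W" "y \<in> W" for x y c
    using that by (auto simp: W_def inner_add_left)
  have dimE: "dim E < DIM(real^'m)"
    using dim_le_card[OF order_refl fin] card by simp
  obtain x0 :: "real^'m" where x0: "x0 \<noteq> 0" "\<And>y. y \<in> span E \<Longrightarrow> orthogonal x0 y"
    using orthogonal_to_subspace_exists[OF dimE] by blast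
  have "x0 \<in> W" using x0 span_base by (force simp: W_def orthogonal_def)
  hence "(1/norm x0) *\<^sub>R x0 \<in> K" using x0 Wsub by (simp add: K_def)
  hence Kne: "K \<noteq> {}" by blast
  have "closed W"
  proof -
    have "W = (\<Inter>e\<in>E. {x. e \<bullet> x = 0})" by (auto simp: W_def inner_commute)
    thus ?thesis by (auto intro!: closed_INT closed_hyperplane)
  qed
  hence "compact K" unfolding K_def by (simp add: closed_Int_compact)
  moreover have "continuous_on K f" unfolding f_def
    by (intro continuous_intros)
  ultimately obtain v where vK: "v \<in> K" and vmax: "\<And>y. y \<in> K \<Longrightarrow> f y \<le> f v"
    using continuous_attains_sup[OF _ Kne] by blast
  have vW: "v \<in> W" and vn: "v \<bullet> v = 1" using vK by (auto simp: K_def dot_square_norm)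
  have fscale: "f (c *\<^sub>R x) = c^2 * f x" for c x
    by (simp add: f_def matrix_vector_mult_scaleR power2_eq_square)
  have hom: "f z \<le> f v * (z \<bullet> z)" if "z \<in> W" for z
  proof (cases "z = 0")
    case True thus ?thesis by (simp add: f_def)
  next
    case False
    hence "(1/norm z) *\<^sub>R z \<in> K" using that Wsub by (simp add: K_def)
    hence "f ((1/norm z) *\<^sub>R z) \<le> f v" by (rule vmax)
    hence "f z / (norm z)^2 \<le> f v" by (simp add: fscale power_divide)
    moreover have "z \<bullet> z = (norm z)^2" by (simp add: dot_square_norm)
    ultimately show ?thesis using False by (simp add: divide_le_eq mult.commute)
  qed
  have perp: "y \<bullet> (S *v v) = 0" if yW: "y \<in> W" and yv: "y \<bullet> v = 0" for y
  proof (rule quad_zero)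
    fix t :: real
    have xt: "v + t *\<^sub>R y \<in> W" using vW yW Wsub by blast
    have "f (v + t *\<^sub>R y) = f v + 2*t*(y \<bullet> (S *v v)) + t^2 * f y"
      using sym_inner[OF sym, of v y]
      by (simp add: f_def matrix_vector_right_distrib matrix_vector_mult_scaleR inner_add_left
          inner_add_right power2_eq_square algebra_simps inner_commute)
    moreover have "(v + t *\<^sub>R y) \<bullet> (v + t *\<^sub>R y) = 1 + t^2 * (y \<bullet> y)"
      using vn yv by (simp add: inner_add_left inner_add_right power2_eq_square inner_commute)
    ultimately have "f v + 2*t*(y \<bullet> (S *v v)) + t^2 * f y \<le> f v * (1 + t^2 * (y \<bullet> y))"
      using hom[OF xt] by simp
    thus "2*t*(y \<bullet> (S *v v)) + t^2 * (f y - f v * (y \<bullet> y)) \<le> 0"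
      by (simp add: algebra_simps)
  qed
  have SvW: "S *v v \<in> W"
  proof -
    { fix e assume e: "e \<in> E"
      then obtain l where l: "S *v e = l *\<^sub>R e" using eig by blast
      have "(S *v v) \<bullet> e = v \<bullet> (S *v e)" using sym_inner[OF sym, of v e] by (simp add: inner_commute)
      also have "\<dots> = 0" using vW e l by (simp add: W_def inner_commute)
      finally have "(S *v v) \<bullet> e = 0" . }
    thus ?thesis by (simp add: W_def)
  qed
  define z where "z = S *v v - (v \<bullet> (S *v v)) *\<^sub>R v"
  have zW: "z \<in> W" unfolding z_def using SvW vW Wsub[of _ "- (v \<bullet> (S *v v)) *\<^sub>R v"]
    by (simp add: W_def inner_diff_left)
  have zv: "z \<bullet> v = 0" unfolding z_def using vn by (simp add: inner_diff_left inner_commute[of "S *v v" v])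
  have "z \<bullet> z = z \<bullet> (S *v v) - (v \<bullet> (S *v v)) * (z \<bullet> v)"
    by (simp add: z_def inner_diff_right)
  also have "\<dots> = 0" using perp[OF zW zv] zv by simp
  finally have "z = 0" by simp
  hence "S *v v = (v \<bullet> (S *v v)) *\<^sub>R v" by (simp add: z_def)
  thus ?thesis using vn vW by (auto simp: W_def)
qed

lemma spectral:
  fixes S :: "real^'m^'m"
  assumes sym: "transpose S = S"
  obtains u :: "'m \<Rightarrow> real^'m" and l :: "'m \<Rightarrow> real"
  where "\<And>i j. u i \<bullet> u j = (if i = j then 1 else 0)" "\<And>i. S *v u i = l i *\<^sub>R u i"
proof -
  have "\<forall>k. k \<le> CARD('m) \<longrightarrow> (\<exists>E::(real^'m) set. finite E \<and> card E = k \<and> (\<forall>e\<in>E. e \<bullet> e = 1)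
          \<and> (\<forall>e\<in>E. \<forall>f\<in>E. e \<noteq> f \<longrightarrow> e \<bullet> f = 0) \<and> (\<forall>e\<in>E. \<exists>l. S *v e = l *\<^sub>R e))"
  proof
    fix k show "k \<le> CARD('m) \<longrightarrow> (\<exists>E::(real^'m) set. finite E \<and> card E = k \<and> (\<forall>e\<in>E. e \<bullet> e = 1)
          \<and> (\<forall>e\<in>E. \<forall>f\<in>E. e \<noteq> f \<longrightarrow> e \<bullet> f = 0) \<and> (\<forall>e\<in>E. \<exists>l. S *v e = l *\<^sub>R e))"
    proof (induction k)
      case 0 show ?case by (intro impI exI[of _ "{}"]) auto
    next
      case (Suc k)
      show ?case
      proof
        assume "Suc k \<le> CARD('m)"
        with Suc.IH obtain E :: "(real^'m) set" where E: "finite E" "card E = k" "\<forall>e\<in>E. e \<bullet> e = 1"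
          "\<forall>e\<in>E. \<forall>f\<in>E. e \<noteq> f \<longrightarrow> e \<bullet> f = 0" "\<forall>e\<in>E. \<exists>l. S *v e = l *\<^sub>R e" by auto
        obtain v where v: "v \<bullet> v = 1" "\<forall>e\<in>E. v \<bullet> e = 0" "\<exists>l. S *v v = l *\<^sub>R v"
          using eig_step[OF sym E(1)] E \<open>Suc k \<le> CARD('m)\<close> by force
        have "v \<notin> E" using v by auto
        have v2: "\<forall>e\<in>E. e \<bullet> v = 0" using v(2) by (metis inner_commute)
        show "\<exists>E::(real^'m) set. finite E \<and> card E = Suc k \<and> (\<forall>e\<in>E. e \<bullet> e = 1)
          \<and> (\<forall>e\<in>E. \<forall>f\<in>E. e \<noteq> f \<longrightarrow> e \<bullet> f = 0) \<and> (\<forall>e\<in>E. \<exists>l. S *v e = l *\<^sub>R e)"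
          using E v v2 \<open>v \<notin> E\<close>
          by (intro exI[of _ "insert v E"]) auto
      qed
    qed
  qed
  from this[rule_format, of "CARD('m)"] obtain E :: "(real^'m) set" where E: "finite E" "card E = CARD('m)" "\<forall>e\<in>E. e \<bullet> e = 1"
    "\<forall>e\<in>E. \<forall>f\<in>E. e \<noteq> f \<longrightarrow> e \<bullet> f = 0" "\<forall>e\<in>E. \<exists>l. S *v e = l *\<^sub>R e" by auto
  obtain h :: "'m \<Rightarrow> real^'m" where h: "bij_betw h UNIV E"
    using finite_same_card_bij[of "UNIV::'m set" E] E by auto
  have hE: "h i \<in> E" for i using h by (auto simp: bij_betw_def)
  have hinj: "h i \<noteq> h j" if "i \<noteq> j" for i j using h that by (auto simp: bij_betw_def inj_on_def)
  define l where "l i = (SOME l. S *v h i = l *\<^sub>R h i)" for i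
  have "S *v h i = l i *\<^sub>R h i" for i
    unfolding l_def by (rule someI_ex) (use E(5) hE in blast)
  moreover have "h i \<bullet> h j = (if i = j then 1 else 0)" for i j
    using E(3,4) hE hinj by auto
  ultimately show ?thesis using that by blast
qed

lemma spectral_ex:
  fixes S :: "real^'m^'m"
  assumes sym: "transpose S = S"
  shows "\<exists>(u::'m \<Rightarrow> real^'m) l. (\<forall>i j. u i \<bullet> u j = (if i = j then 1 else 0 :: real)) \<and> (\<forall>i. S *v u i = l i *\<^sub>R u i)"
proof -
  obtain u :: "'m \<Rightarrow> real^'m" and l :: "'m \<Rightarrow> real"
  where "\<And>i j. u i \<bullet> u j = (if i = j then 1 else 0)" "\<And>i. S *v u i = l i *\<^sub>R u i"
    using spectral[OF sym] by metis
  thus ?thesis by (intro exI[of _ u] exI[of _ l]) auto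
qed


definition cols :: "('m::finite \<Rightarrow> real^'m) \<Rightarrow> real^'m^'m" where
  "cols u = (\<chi> i j. u j $ i)"

lemma cols_mv: "(V *v a) \<bullet> w = a \<bullet> (transpose V *v w)" for V :: "real^'m^'m"
proof -
  have "(V *v a) \<bullet> w = (a v* transpose V) \<bullet> w" by simp
  also have "\<dots> = a \<bullet> (transpose V *v w)" by (rule dot_lmul_matrix)
  finally show ?thesis .
qed

lemma cols_entry:
  "(transpose (cols u) ** B ** cols v) $ i $ j = u i \<bullet> (B *v v j)"
proof -
  have "(transpose (cols u) ** B ** cols v) $ i $ j = (\<Sum>k\<in>UNIV. (\<Sum>l\<in>UNIV. u i $ l * B $ l $ k) * v j $ k)"
    by (simp add: cols_def matrix_matrix_mult_def transpose_def)
  also have "\<dots> = (\<Sum>k\<in>UNIV. \<Sum>l\<in>UNIV. u i $ l * (B $ l $ k * v j $ k))"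
    by (simp add: sum_distrib_right mult.assoc)
  also have "\<dots> = (\<Sum>l\<in>UNIV. \<Sum>k\<in>UNIV. u i $ l * (B $ l $ k * v j $ k))"
    by (rule sum.swap)
  also have "\<dots> = u i \<bullet> (B *v v j)"
    by (simp add: inner_vec_def matrix_vector_mult_def sum_distrib_left)
  finally show ?thesis .
qed

lemma cols_apply: "cols u *v e = (\<Sum>j\<in>UNIV. e $ j *\<^sub>R u j)"
  by (simp add: cols_def matrix_vector_mult_def vec_eq_iff sum_component mult.commute)
lemma simdiag:
  fixes X Y :: "real^'m^'m"
  assumes symX: "transpose X = X" and symY: "transpose Y = Y"
    and psdX: "\<And>x. 0 \<le> x \<bullet> (X *v x)" and detX: "det X \<noteq> 0"
  obtains u :: "'m \<Rightarrow> real^'m" where "\<And>i j. u i \<bullet> (X *v u j) = (if i = j then 1 else 0)"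
    "\<And>i j. i \<noteq> j \<Longrightarrow> u i \<bullet> (Y *v u j) = 0"
proof -
  obtain q :: "'m \<Rightarrow> real^'m" and lam :: "'m \<Rightarrow> real" where q: "\<And>i j. q i \<bullet> q j = (if i = j then 1 else 0)" "\<And>i. X *v q i = lam i *\<^sub>R q i"
    using spectral_ex[OF symX] by blast
  have injX: "inj ((*v) X)"
  proof -
    have "invertible X" using detX by (simp add: invertible_det_nz)
    thus ?thesis by (rule inj_matrix_vector_mult)
  qed
  have lpos: "lam i > 0" for i
  proof -
    have "lam i = q i \<bullet> (X *v q i)" using q(1)[of i i] by (simp add: q(2))
    hence ge: "lam i \<ge> 0" using psdX by simp
    have "q i \<noteq> 0" using q(1)[of i i] by auto
    have "X *v q i \<noteq> 0"
    proof
      assume "X *v q i = 0"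
      hence "X *v q i = X *v 0" by simp
      hence "q i = 0" using injD[OF injX] by blast
      thus False using \<open>q i \<noteq> 0\<close> by simp
    qed
    hence "lam i \<noteq> 0" using q(2) by auto
    thus ?thesis using ge by simp
  qed
  define v where "v i = (1 / sqrt (lam i)) *\<^sub>R q i" for i
  have vX: "v i \<bullet> (X *v v j) = (if i = j then 1 else 0)" for i j
  proof -
    have "v i \<bullet> (X *v v j) = (1 / sqrt (lam i)) * (1 / sqrt (lam j)) * lam j * (q i \<bullet> q j)"
      by (simp add: v_def matrix_vector_mult_scaleR q(2))
    also have "\<dots> = (if i = j then 1 else 0)"
      proof (cases "i = j")
      case True
      have "sqrt (lam j) * sqrt (lam j) = lam j" using lpos[of j] by simp
      thus ?thesis using True q(1)[of j j] lpos[of j] by (simp add: field_simps)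
    qed (use q(1)[of i j] in simp)
    finally show ?thesis .
  qed
  define V where "V = cols v"
  define Y2 where "Y2 = transpose V ** Y ** V"
  have VXV: "transpose V ** X ** V = mat 1"
    by (simp add: vec_eq_iff V_def cols_entry vX mat_def)
  have "transpose Y2 = Y2" unfolding Y2_def
    by (simp only: matrix_transpose_mul symY matrix_mul_assoc transpose_transpose)
  then obtain r :: "'m \<Rightarrow> real^'m" and mu :: "'m \<Rightarrow> real" where r: "\<And>i j. r i \<bullet> r j = (if i = j then 1 else 0)" "\<And>i. Y2 *v r i = mu i *\<^sub>R r i"
    using spectral_ex by blast
  define u where "u i = V *v r i" for i
  have key: "u i \<bullet> (Z *v u j) = r i \<bullet> ((transpose V ** Z ** V) *v r j)" for Z i j
  proof -
    have "u i \<bullet> (Z *v u j) = r i \<bullet> (transpose V *v (Z *v (V *v r j)))"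
      unfolding u_def by (rule cols_mv)
    also have "transpose V *v (Z *v (V *v r j)) = (transpose V ** Z ** V) *v r j"
      by (simp only: matrix_vector_mul_assoc matrix_mul_assoc)
    finally show ?thesis .
  qed
  show ?thesis
  proof (rule that)
    fix i j :: 'm show "u i \<bullet> (X *v u j) = (if i = j then 1 else 0)"
      using key[of i X j] VXV r(1) by simp
  next
    fix i j :: 'm assume "i \<noteq> j"
    thus "u i \<bullet> (Y *v u j) = 0"
      using key[of i Y j] r by (simp add: Y2_def[symmetric])
  qed
qed

lemma matrix_inv_eq:
  fixes X P :: "real^'m^'m"
  assumes "P ** X = mat 1"
  shows "matrix_inv X = P"
proof -
  have XP: "X ** P = mat 1" using assms matrix_left_right_inverse by blast
  have ex: "\<exists>A'. X ** A' = mat 1 \<and> A' ** X = mat 1" using XP assms by blast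
  define Q where "Q = matrix_inv X"
  have Q: "X ** Q = mat 1 \<and> Q ** X = mat 1"
    unfolding Q_def matrix_inv_def by (rule someI_ex[OF ex])
  have "Q = Q ** (X ** P)" using XP by simp
  also have "\<dots> = (Q ** X) ** P" by (simp add: matrix_mul_assoc)
  also have "\<dots> = P" using Q by simp
  finally show ?thesis unfolding Q_def .
qed

lemma simdiag_conseq:
  fixes X Y :: "real^'m^'m" and u :: "'m \<Rightarrow> real^'m"
  assumes uX: "\<And>i j. u i \<bullet> (X *v u j) = (if i = j then 1 else 0)"
    and uY: "\<And>i j. i \<noteq> j \<Longrightarrow> u i \<bullet> (Y *v u j) = 0"
  shows "det Y = (\<Prod>k\<in>UNIV. u k \<bullet> (Y *v u k)) * det X"
    and "\<And>B. trace (matrix_inv X ** B) = (\<Sum>k\<in>UNIV. u k \<bullet> (B *v u k))"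
proof -
  define U where "U = cols u"
  have UXU: "transpose U ** X ** U = mat 1"
    by (simp add: vec_eq_iff U_def cols_entry uX mat_def)
  have dX: "det U * det U * det X = 1"
  proof -
    have "det (transpose U ** X ** U) = 1" using UXU by simp
    thus ?thesis by (simp add: det_mul mult_ac)
  qed
  have "det (transpose U ** Y ** U) = (\<Prod>k\<in>UNIV. (transpose U ** Y ** U) $ k $ k)"
    by (rule det_diagonal) (simp add: U_def cols_entry uY)
  hence "det U * det U * det Y = (\<Prod>k\<in>UNIV. u k \<bullet> (Y *v u k))"
    by (simp add: det_mul U_def cols_entry mult_ac)
  hence "det U * det U * det Y * det X = (\<Prod>k\<in>UNIV. u k \<bullet> (Y *v u k)) * det X" by simp
  thus "det Y = (\<Prod>k\<in>UNIV. u k \<bullet> (Y *v u k)) * det X" using dX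
    by (metis mult.commute mult.left_commute mult_1)
  have "U ** (transpose U ** X) = mat 1"
    using UXU matrix_left_right_inverse by (metis matrix_mul_assoc)
  hence "(U ** transpose U) ** X = mat 1" by (simp add: matrix_mul_assoc)
  hence inv: "matrix_inv X = U ** transpose U" by (rule matrix_inv_eq)
  fix B :: "real^'m^'m"
  have "trace (matrix_inv X ** B) = trace (U ** (transpose U ** B))"
    by (simp add: inv matrix_mul_assoc)
  also have "\<dots> = trace ((transpose U ** B) ** U)" by (rule trace_mul_sym)
  also have "\<dots> = (\<Sum>k\<in>UNIV. u k \<bullet> (B *v u k))"
    by (simp add: trace_def U_def cols_entry)
  finally show "trace (matrix_inv X ** B) = (\<Sum>k\<in>UNIV. u k \<bullet> (B *v u k))" .
qed

lemma sum_mv: "(sum B I) *v x = (\<Sum>i\<in>I. B i *v x)" for B :: "'a \<Rightarrow> real^'m^'m"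
  by (induction I rule: infinite_finite_induct) (auto simp: matrix_vector_mult_add_rdistrib)

lemma transpose_sum: "transpose (sum B I) = (\<Sum>i\<in>I. transpose (B i))" for B :: "'a \<Rightarrow> real^'m^'m"
  by (induction I rule: infinite_finite_induct) (auto simp: transpose_def vec_eq_iff)

lemma transpose_scaleR': "transpose (c *\<^sub>R A) = c *\<^sub>R transpose A" for A :: "real^'m^'m"
  by (simp add: transpose_scalar)

lemma jensen_ln:
  fixes a y :: "'a \<Rightarrow> real"
  assumes "finite S" "S \<noteq> {}" "(\<Sum>i\<in>S. a i) = 1" "\<And>i. i \<in> S \<Longrightarrow> a i \<ge> 0"
    "\<And>i. i \<in> S \<Longrightarrow> y i > 0"
  shows "(\<Sum>i\<in>S. a i * ln (y i)) \<le> ln (\<Sum>i\<in>S. a i * y i)"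
proof -
  have "convex_on {0<..} (\<lambda>x. - ln x)" using ln_concave by (simp add: concave_on_def)
  from convex_on_sum[OF assms(1,2) this assms(3,4), of y] assms(5)
  have "- ln (\<Sum>i\<in>S. a i *\<^sub>R y i) \<le> (\<Sum>i\<in>S. a i * - ln (y i))" by auto
  thus ?thesis by (simp add: sum_negf)
qed

lemma key:
  fixes B :: "'n::finite \<Rightarrow> real^'m^'m" and r :: "'n \<Rightarrow> real"
  assumes psd: "\<And>i. nonneg_def_mat (B i)" and rpos: "\<And>i. r i > 0"
    and detX: "det (\<Sum>i\<in>UNIV. B i) > 0"
  shows "det (\<Sum>i\<in>UNIV. r i *\<^sub>R B i) > 0"
    and "ln (det (\<Sum>i\<in>UNIV. B i)) + (\<Sum>i\<in>UNIV. trace (matrix_inv (\<Sum>i\<in>UNIV. B i) ** B i) * ln (r i))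
          \<le> ln (det (\<Sum>i\<in>UNIV. r i *\<^sub>R B i))"
    and "\<And>i. trace (matrix_inv (\<Sum>i\<in>UNIV. B i) ** B i) \<ge> 0"
    and "(\<Sum>i\<in>UNIV. trace (matrix_inv (\<Sum>i\<in>UNIV. B i) ** B i)) = real CARD('m)"
proof -
  define X where "X = (\<Sum>i\<in>UNIV. B i)"
  define Y where "Y = (\<Sum>i\<in>UNIV. r i *\<^sub>R B i)"
  have symB: "transpose (B i) = B i" for i using psd by (simp add: nonneg_def_mat_def)
  have psdB: "0 \<le> x \<bullet> (B i *v x)" for i x using psd by (simp add: nonneg_def_mat_def)
  have symX: "transpose X = X" by (simp add: X_def transpose_sum symB)
  have symY: "transpose Y = Y" by (simp add: Y_def transpose_sum transpose_scalar symB)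
  have psdX: "0 \<le> x \<bullet> (X *v x)" for x by (simp add: X_def sum_mv inner_sum_right sum_nonneg psdB)
  have dX0: "det X \<noteq> 0" using detX by (simp add: X_def)
  obtain u :: "'m \<Rightarrow> real^'m" where uX: "\<And>i j. u i \<bullet> (X *v u j) = (if i = j then 1 else 0)"
    and uY: "\<And>i j. i \<noteq> j \<Longrightarrow> u i \<bullet> (Y *v u j) = 0"
    using simdiag[OF symX symY psdX dX0] by metis
  note cq = simdiag_conseq[OF uX uY]
  define c where "c i k = u k \<bullet> (B i *v u k)" for i k
  have c0: "c i k \<ge> 0" for i k by (simp add: c_def psdB)
  have c1: "(\<Sum>i\<in>UNIV. c i k) = 1" for k
    using uX[of k k] by (simp add: c_def X_def sum_mv inner_sum_right)
  have mu: "u k \<bullet> (Y *v u k) = (\<Sum>i\<in>UNIV. c i k * r i)" for k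
    by (simp add: c_def Y_def sum_mv inner_sum_right scaleR_matrix_vector_assoc[symmetric] mult.commute)
  have mupos: "(\<Sum>i\<in>UNIV. c i k * r i) > 0" for k
  proof -
    obtain i where "c i k \<noteq> 0"
      using c1[of k] by (metis (no_types, lifting) sum.neutral zero_neq_one)
    hence "c i k * r i > 0" using c0[of i k] rpos[of i] by simp
    thus ?thesis by (intro sum_pos2[of UNIV i]) (auto intro: mult_nonneg_nonneg c0 less_imp_le rpos)
  qed
  have tr: "trace (matrix_inv X ** B i) = (\<Sum>k\<in>UNIV. c i k)" for i
    by (simp add: cq(2) c_def)
  have dY: "det Y = (\<Prod>k\<in>UNIV. (\<Sum>i\<in>UNIV. c i k * r i)) * det X"
    using cq(1) by (simp add: mu)
  have dYpos: "det Y > 0" unfolding dY using detX mupos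
    by (simp add: X_def prod_pos)
  thus "det (\<Sum>i\<in>UNIV. r i *\<^sub>R B i) > 0" by (simp add: Y_def)
  have "ln (det Y) = (\<Sum>k\<in>UNIV. ln (\<Sum>i\<in>UNIV. c i k * r i)) + ln (det X)"
    unfolding dY using detX mupos
    by (simp add: X_def ln_mult prod_pos ln_prod less_imp_neq[symmetric])
  moreover have "(\<Sum>i\<in>UNIV. trace (matrix_inv X ** B i) * ln (r i))
      = (\<Sum>k\<in>UNIV. \<Sum>i\<in>UNIV. c i k * ln (r i))"
  proof -
    have "(\<Sum>i\<in>UNIV. trace (matrix_inv X ** B i) * ln (r i))
      = (\<Sum>i\<in>UNIV. \<Sum>k\<in>UNIV. c i k * ln (r i))"
      by (simp add: tr sum_distrib_right)
    also have "\<dots> = (\<Sum>k\<in>UNIV. \<Sum>i\<in>UNIV. c i k * ln (r i))" by (rule sum.swap)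
    finally show ?thesis .
  qed
  moreover have "(\<Sum>i\<in>UNIV. c i k * ln (r i)) \<le> ln (\<Sum>i\<in>UNIV. c i k * r i)" for k
    by (rule jensen_ln) (auto simp: c1 c0 rpos)
  hence "(\<Sum>k\<in>UNIV. \<Sum>i\<in>UNIV. c i k * ln (r i)) \<le> (\<Sum>k\<in>UNIV. ln (\<Sum>i\<in>UNIV. c i k * r i))"
    by (rule sum_mono)
  ultimately show "ln (det (\<Sum>i\<in>UNIV. B i)) + (\<Sum>i\<in>UNIV. trace (matrix_inv (\<Sum>i\<in>UNIV. B i) ** B i) * ln (r i))
          \<le> ln (det (\<Sum>i\<in>UNIV. r i *\<^sub>R B i))"
    unfolding X_def[symmetric] Y_def[symmetric] by linarith
  show "\<And>i. trace (matrix_inv (\<Sum>i\<in>UNIV. B i) ** B i) \<ge> 0"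
    unfolding X_def[symmetric] tr by (simp add: sum_nonneg c0)
  have "(\<Sum>i\<in>UNIV. trace (matrix_inv X ** B i)) = (\<Sum>i\<in>UNIV. \<Sum>k\<in>UNIV. c i k)"
    by (simp add: tr)
  also have "\<dots> = (\<Sum>k\<in>UNIV. \<Sum>i\<in>UNIV. c i k)" by (rule sum.swap)
  also have "\<dots> = real CARD('m)" by (simp add: c1)
  finally show "(\<Sum>i\<in>UNIV. trace (matrix_inv (\<Sum>i\<in>UNIV. B i) ** B i)) = real CARD('m)"
    by (simp add: X_def)
qed



lemma ln_lt_minus_one:
  fixes x :: real assumes "0 < x" "x \<noteq> 1" shows "ln x < x - 1"
proof -
  define f where "f t = t - 1 - ln t" for t :: real
  have d: "DERIV f t :> 1 - 1/t" if "t > 0" for t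
    unfolding f_def using that by (auto intro!: derivative_eq_intros)
  have c: "continuous_on {a..b} f" if "a > 0" for a b
    unfolding f_def using that by (intro continuous_intros) auto
  show ?thesis
  proof (cases "x > 1")
    case True
    have "f 1 < f x"
    proof (rule DERIV_pos_imp_increasing_open[OF True])
      fix t :: real assume t: "1 < t" "t < x"
      thus "\<exists>y. DERIV f t :> y \<and> y > 0" using d[of t] by (intro exI[of _ "1 - 1/t"]) auto
    qed (use c in auto)
    thus ?thesis by (simp add: f_def)
  next
    case False
    hence "x < 1" using assms by simp
    have "f x > f 1"
    proof (rule DERIV_neg_imp_decreasing_open[OF \<open>x < 1\<close>])
      fix t :: real assume t: "x < t" "t < 1"
      hence "1 - 1/t < 0" using assms by (simp add: field_simps)
      thus "\<exists>y. DERIV f t :> y \<and> y < 0" using d[of t] t assms by (intro exI[of _ "1 - 1/t"]) auto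
    qed (use c assms in auto)
    thus ?thesis by (simp add: f_def)
  qed
qed

lemma hpos:
  fixes r b :: real
  assumes b1: "b \<le> 1" and r0: "0 < r" and br: "b \<le> r" and r1: "r \<noteq> 1"
  shows "(r + b) * ln r - (1 + b) * (r - 1) > 0"
proof -
  define h where "h t = (t + b) * ln t - (1 + b) * (t - 1)" for t :: real
  have d: "DERIV h t :> ln t + b * (1 - t) / t" if "t > 0" for t
    unfolding h_def using that
    by (auto intro!: derivative_eq_intros simp: field_simps)
  have c: "continuous_on {a..c} h" if "a > 0" for a c
    unfolding h_def using that by (intro continuous_intros) auto
  have h1: "h 1 = 0" by (simp add: h_def)
  show ?thesis
  proof (cases "r > 1")
    case True
    have "h 1 < h r"
    proof (rule DERIV_pos_imp_increasing_open[OF True])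
      fix x :: real assume x: "1 < x" "x < r"
      have "ln (1/x) < 1/x - 1" using x by (intro ln_lt_minus_one) auto
      hence l: "ln x > 1 - 1/x" using x by (simp add: ln_div)
      have "b * (1 - x) \<ge> 1 * (1 - x)" using b1 x by (intro mult_right_mono_neg) auto
      hence "b * (1 - x) / x \<ge> (1 - x) / x" using x by (intro divide_right_mono) auto
      moreover have "(1 - x)/x = 1/x - 1" using x by (simp add: field_simps)
      ultimately have "ln x + b * (1 - x) / x > 0" using l by linarith
      thus "\<exists>y. DERIV h x :> y \<and> y > 0" using d[of x] x by auto
    qed (use c in auto)
    thus ?thesis by (simp add: h_def h1)
  next
    case False
    hence "r < 1" using r1 by simp
    have "h r > h 1"
    proof (rule DERIV_neg_imp_decreasing_open[OF \<open>r < 1\<close>])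
      fix x :: real assume x: "r < x" "x < 1"
      have l: "ln x < x - 1" using x r0 by (intro ln_lt_minus_one) auto
      have "b * (1 - x) \<le> x * (1 - x)" using br x by (intro mult_right_mono) auto
      hence "b * (1 - x) / x \<le> 1 - x" using x r0 by (simp add: divide_le_eq)
      hence "ln x + b * (1 - x) / x < 0" using l by linarith
      thus "\<exists>y. DERIV h x :> y \<and> y < 0" using d[of x] x r0 by auto
    qed (use c r0 in auto)
    thus ?thesis by (simp add: h_def h1)
  qed
qed



lemma continuous_det: "continuous_on UNIV (det :: real^'m^'m \<Rightarrow> real)"
  unfolding det_def[abs_def] by (intro continuous_intros)

definition Hm :: "'m::finite \<Rightarrow> 'm \<Rightarrow> real^'m^'m \<Rightarrow> real^'m^'m" where
  "Hm k j X = (\<chi> a b. if b = k then (if a = j then 1 else 0) else X $ a $ b)"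

lemma continuous_det_Hm: "continuous_on UNIV (\<lambda>X::real^'m^'m. det (Hm k j X))"
proof -
  have "continuous_on UNIV (Hm k j :: real^'m^'m \<Rightarrow> _)"
    unfolding Hm_def
  proof (intro continuous_on_vec_lambda)
    fix a b
    show "continuous_on UNIV (\<lambda>X::real^'m^'m. if b = k then (if a = j then 1 else 0) else X $ a $ b)"
      by (cases "b = k") (auto intro!: continuous_intros)
  qed
  thus ?thesis using continuous_on_compose[OF _ continuous_on_subset[OF continuous_det]]
    by (metis continuous_on_compose2 continuous_det top_greatest)
qed

lemma matrix_inv_singular:
  fixes X :: "real^'m^'m"
  assumes "det X = 0"
  shows "matrix_inv X = matrix_inv (0::real^'m^'m)"
proof -
  have nX: "\<not> (X ** A' = mat 1 \<and> A' ** X = mat 1)" for A'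
  proof
    assume "X ** A' = mat 1 \<and> A' ** X = mat 1"
    hence "det (X ** A') = 1" by simp
    thus False using assms by (simp add: det_mul)
  qed
  have n0: "\<not> ((0::real^'m^'m) ** A' = mat 1 \<and> A' ** 0 = mat 1)" for A'
  proof
    assume "(0::real^'m^'m) ** A' = mat 1 \<and> A' ** 0 = mat 1"
    hence "mat 1 = (0::real^'m^'m)" by simp
    hence "(mat 1::real^'m^'m) $ undefined $ undefined = 0" by simp
    thus False by (simp add: mat_def)
  qed
  show ?thesis unfolding matrix_inv_def using nX n0 by metis
qed

lemma matrix_inv_entry:
  fixes X :: "real^'m^'m"
  shows "matrix_inv X $ k $ j = (if det X = 0 then matrix_inv (0::real^'m^'m) $ k $ j
                                 else det (Hm k j X) / det X)"
proof (cases "det X = 0")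
  case True thus ?thesis using matrix_inv_singular[OF True] by simp
next
  case False
  define Q where "Q = matrix_inv X"
  have ex: "\<exists>A'. X ** A' = mat 1 \<and> A' ** X = mat 1"
    using False invertible_det_nz[of X] unfolding invertible_def by blast
  have Q: "X ** Q = mat 1" unfolding Q_def matrix_inv_def using someI_ex[OF ex] by blast
  define e :: "real^'m" where "e = (\<chi> a. if a = j then 1 else 0)"
  have "X *v (Q *v e) = e" by (simp add: matrix_vector_mul_assoc Q)
  hence "Q *v e = (\<chi> k. det (\<chi> a b. if b = k then e $ a else X $ a $ b) / det X)"
    using cramer[OF False] by blast
  hence "(Q *v e) $ k = det (\<chi> a b. if b = k then e $ a else X $ a $ b) / det X"
    by simp
  also have "(\<chi> a b. if b = k then e $ a else X $ a $ b) = Hm k j X"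
    by (simp add: Hm_def e_def vec_eq_iff)
  finally have "(Q *v e) $ k = det (Hm k j X) / det X" .
  moreover have "(Q *v e) $ k = Q $ k $ j"
    by (simp add: matrix_vector_mult_def e_def if_distrib cong: if_cong)
  ultimately show ?thesis using False by (simp add: Q_def)
qed

lemma trace_inv_formula:
  fixes X A :: "real^'m^'m"
  shows "trace (matrix_inv X ** A) = (\<Sum>k\<in>UNIV. \<Sum>j\<in>UNIV.
     (if det X = 0 then matrix_inv (0::real^'m^'m) $ k $ j else det (Hm k j X) / det X) * A $ j $ k)"
  by (simp add: trace_def matrix_matrix_mult_def matrix_inv_entry)

lemma meas_det:
  fixes F :: "'p \<Rightarrow> real^'m^'m"
  assumes "F \<in> borel_measurable M"
  shows "(\<lambda>x. det (F x)) \<in> borel_measurable M"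
    and "(\<lambda>x. det (Hm k j (F x))) \<in> borel_measurable M"
  using measurable_compose[OF assms borel_measurable_continuous_onI[OF continuous_det]]
    measurable_compose[OF assms borel_measurable_continuous_onI[OF continuous_det_Hm]]
  by auto

lemma meas_entry:
  fixes F :: "'p \<Rightarrow> real^'m^'m"
  assumes "F \<in> borel_measurable M"
  shows "(\<lambda>x. F x $ a $ b) \<in> borel_measurable M"
proof -
  have "continuous_on UNIV (\<lambda>X::real^'m^'m. X $ a $ b)"
    by (intro continuous_intros continuous_on_id)
  thus ?thesis using measurable_compose[OF assms borel_measurable_continuous_onI] by blast
qed

lemma meas_trace_inv:
  fixes F G :: "'p \<Rightarrow> real^'m^'m"
  assumes "F \<in> borel_measurable M" "G \<in> borel_measurable M"
  shows "(\<lambda>x. trace (matrix_inv (F x) ** G x)) \<in> borel_measurable M"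
  unfolding trace_inv_formula
  using assms meas_det[OF assms(1)] meas_entry[OF assms(2)]
  by (intro borel_measurable_sum borel_measurable_times measurable_If borel_measurable_divide) auto



lemma scalar_final:
  fixes w w' d :: "'n::finite \<Rightarrow> real" and al m :: real
  assumes sw: "(\<Sum>i\<in>UNIV. w i) = 1" and wpos: "\<And>i. w i > 0"
    and sw': "(\<Sum>i\<in>UNIV. w' i) = 1" and w'pos: "\<And>i. w' i > 0"
    and swd: "(\<Sum>i\<in>UNIV. w i * d i) = m" and mpos: "m > 0"
    and upd: "\<And>i. w' i = w i * (d i - al) / (m - al)"
    and al: "\<And>i. al \<le> d i / 2"
  shows "(\<Sum>i\<in>UNIV. w i * d i * ln (w' i / w i)) \<ge> 0"
    and "(\<Sum>i\<in>UNIV. w i * d i * ln (w' i / w i)) = 0 \<Longrightarrow> (\<forall>i. w' i = w i)"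
proof -
  have "(\<Sum>i\<in>UNIV. w i * al) \<le> (\<Sum>i\<in>UNIV. w i * (d i / 2))"
    using al wpos by (intro sum_mono mult_left_mono) (auto intro: less_imp_le)
  hence "al \<le> m / 2" using sw swd by (simp add: sum_distrib_right[symmetric] sum_divide_distrib[symmetric])
  define D where "D = m - al"
  have D: "D > 0" using \<open>al \<le> m/2\<close> mpos by (simp add: D_def)
  define r where "r i = w' i / w i" for i
  define b where "b = al / D"
  have r: "r i = (d i - al) / D" for i using upd[of i] wpos[of i] by (simp add: r_def D_def)
  have rpos: "r i > 0" for i using w'pos wpos by (simp add: r_def)
  have wr: "w i * r i = w' i" for i using wpos[of i] by (simp add: r_def)
  have br: "b \<le> r i" for i
    using al[of i] D by (simp add: b_def r divide_right_mono)
  have sr: "(\<Sum>i\<in>UNIV. w i * r i) = 1" using sw' by (simp add: wr)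
  have "b = (\<Sum>i\<in>UNIV. w i * b)" using sw by (simp add: sum_distrib_right[symmetric])
  also have "\<dots> \<le> (\<Sum>i\<in>UNIV. w i * r i)" using br wpos by (intro sum_mono mult_left_mono) (auto intro: less_imp_le)
  finally have b1: "b \<le> 1" using sr by simp
  define h where "h t = (t + b) * ln t - (1 + b) * (t - 1)" for t
  have h0: "h (r i) \<ge> 0" for i
  proof (cases "r i = 1")
    case True thus ?thesis by (simp add: h_def)
  next
    case False thus ?thesis using hpos[OF b1 rpos br False] by (simp add: h_def)
  qed
  have dr: "d i = D * (r i + b)" for i using D by (simp add: r b_def field_simps)
  have "(\<Sum>i\<in>UNIV. w i * d i * ln (w' i / w i)) = (\<Sum>i\<in>UNIV. D * (w i * h (r i)) + D * (1 + b) * (w i * r i - w i))"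
    by (intro sum.cong refl) (simp add: dr h_def r_def[symmetric] algebra_simps)
  also have "\<dots> = D * (\<Sum>i\<in>UNIV. w i * h (r i))"
    using sr sw by (simp add: sum.distrib sum_distrib_left[symmetric] sum_subtractf)
  finally have eq: "(\<Sum>i\<in>UNIV. w i * d i * ln (w' i / w i)) = D * (\<Sum>i\<in>UNIV. w i * h (r i))" .
  have nn: "\<And>i. w i * h (r i) \<ge> 0" using wpos h0 by (simp add: less_imp_le)
  show "(\<Sum>i\<in>UNIV. w i * d i * ln (w' i / w i)) \<ge> 0"
    unfolding eq using D nn by (simp add: sum_nonneg)
  assume "(\<Sum>i\<in>UNIV. w i * d i * ln (w' i / w i)) = 0"
  hence "(\<Sum>i\<in>UNIV. w i * h (r i)) = 0" using eq D by simp
  hence "\<forall>i\<in>UNIV. w i * h (r i) = 0" using nn by (subst sum_nonneg_eq_0_iff[symmetric]) auto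
  hence "h (r i) = 0" for i using wpos[of i] by (metis less_irrefl mult_eq_0_iff UNIV_I)
  hence "r i = 1" for i using hpos[OF b1 rpos br] by (force simp: h_def)
  thus "\<forall>i. w' i = w i" using wpos by (simp add: r_def)
qed



lemma nnd_scale: "nonneg_def_mat A \<Longrightarrow> c \<ge> 0 \<Longrightarrow> nonneg_def_mat (c *\<^sub>R A)"
  unfolding nonneg_def_mat_def
  by (auto simp: transpose_scalar scaleR_matrix_vector_assoc[symmetric])

lemma trace_scale: "trace (X ** (c *\<^sub>R A)) = c * trace (X ** A)" for X A :: "real^'m^'m"
  by (simp add: trace_def matrix_matrix_mult_def sum_distrib_left mult.left_commute)

lemma compare:
  fixes A :: "'n::finite \<Rightarrow> 'p \<Rightarrow> real^'m^'m" and v v' :: "real^'n"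
  assumes nnd: "\<And>i. nonneg_def_mat (A i \<theta>)" and vpos: "\<And>i. v$i > 0" and v'pos: "\<And>i. v'$i > 0"
    and dv: "det (Mmat A v \<theta>) > 0"
  shows "det (Mmat A v' \<theta>) > 0"
    and "ln (det (Mmat A v \<theta>)) + (\<Sum>i\<in>UNIV. v$i * trace (matrix_inv (Mmat A v \<theta>) ** A i \<theta>) * ln (v'$i / v$i))
          \<le> ln (det (Mmat A v' \<theta>))"
    and "\<And>i. v$i * trace (matrix_inv (Mmat A v \<theta>) ** A i \<theta>) \<ge> 0"
    and "(\<Sum>i\<in>UNIV. v$i * trace (matrix_inv (Mmat A v \<theta>) ** A i \<theta>)) = real CARD('m)"
proof -
  define B where "B i = v$i *\<^sub>R A i \<theta>" for i
  define r where "r i = v'$i / v$i" for i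
  have psd: "nonneg_def_mat (B i)" for i unfolding B_def using nnd vpos by (intro nnd_scale) (auto intro: less_imp_le)
  have rpos: "r i > 0" for i using vpos v'pos by (simp add: r_def)
  have X: "Mmat A v \<theta> = (\<Sum>i\<in>UNIV. B i)" by (simp add: Mmat_def B_def)
  have Y: "Mmat A v' \<theta> = (\<Sum>i\<in>UNIV. r i *\<^sub>R B i)"
    unfolding Mmat_def B_def r_def using vpos by (intro sum.cong refl) (simp add: less_imp_neq[symmetric])
  have tr: "trace (matrix_inv (Mmat A v \<theta>) ** B i) = v$i * trace (matrix_inv (Mmat A v \<theta>) ** A i \<theta>)" for i
    by (simp add: B_def trace_scale)
  have dX: "det (\<Sum>i\<in>UNIV. B i) > 0" using dv X by simp
  note K = key[of B r, OF psd rpos dX]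
  show "det (Mmat A v' \<theta>) > 0" using K(1) Y by simp
  show "ln (det (Mmat A v \<theta>)) + (\<Sum>i\<in>UNIV. v$i * trace (matrix_inv (Mmat A v \<theta>) ** A i \<theta>) * ln (v'$i / v$i))
          \<le> ln (det (Mmat A v' \<theta>))"
    using K(2) unfolding X[symmetric] Y[symmetric] tr by (simp add: r_def)
  show "\<And>i. v$i * trace (matrix_inv (Mmat A v \<theta>) ** A i \<theta>) \<ge> 0"
    using K(3) unfolding X[symmetric] tr .
  show "(\<Sum>i\<in>UNIV. v$i * trace (matrix_inv (Mmat A v \<theta>) ** A i \<theta>)) = real CARD('m)"
    using K(4) unfolding X[symmetric] tr .
qed

lemma compare_bound:
  fixes A :: "'n::finite \<Rightarrow> 'p \<Rightarrow> real^'m^'m" and v v' :: "real^'n"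
  assumes nnd: "\<And>i. nonneg_def_mat (A i \<theta>)" and vpos: "\<And>i. v$i > 0" and v'pos: "\<And>i. v'$i > 0"
    and dv: "det (Mmat A v \<theta>) > 0"
  shows "ln (det (Mmat A v \<theta>)) - real CARD('m) * (\<Sum>i\<in>UNIV. \<bar>ln (v'$i / v$i)\<bar>) \<le> ln (det (Mmat A v' \<theta>))"
proof -
  define t where "t i = v$i * trace (matrix_inv (Mmat A v \<theta>) ** A i \<theta>)" for i
  note C = compare[OF nnd vpos v'pos dv]
  have t0: "t i \<ge> 0" for i using C(3) by (simp add: t_def)
  have tm: "t i \<le> real CARD('m)" for i
  proof -
    have "t i \<le> (\<Sum>j\<in>UNIV. t j)" by (rule member_le_sum) (auto intro: t0)
    thus ?thesis using C(4) by (simp add: t_def)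
  qed
  have "(\<Sum>i\<in>UNIV. t i * ln (v'$i / v$i)) \<ge> (\<Sum>i\<in>UNIV. - (real CARD('m) * \<bar>ln (v'$i / v$i)\<bar>))"
  proof (rule sum_mono)
    fix i
    have "\<bar>t i * ln (v'$i / v$i)\<bar> \<le> real CARD('m) * \<bar>ln (v'$i / v$i)\<bar>"
      using t0[of i] tm[of i] by (simp add: abs_mult mult_right_mono)
    thus "- (real CARD('m) * \<bar>ln (v'$i / v$i)\<bar>) \<le> t i * ln (v'$i / v$i)" by linarith
  qed
  thus ?thesis using C(2) by (simp add: t_def sum_negf sum_distrib_left)
qed

lemma compare_abs:
  fixes A :: "'n::finite \<Rightarrow> 'p \<Rightarrow> real^'m^'m" and v v' :: "real^'n"
  assumes nnd: "\<And>i. nonneg_def_mat (A i \<theta>)" and vpos: "\<And>i. v$i > 0" and v'pos: "\<And>i. v'$i > 0"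
    and dv: "det (Mmat A v \<theta>) > 0"
  shows "det (Mmat A v' \<theta>) > 0"
    and "\<bar>ln (det (Mmat A v' \<theta>)) - ln (det (Mmat A v \<theta>))\<bar> \<le> real CARD('m) * (\<Sum>i\<in>UNIV. \<bar>ln (v'$i / v$i)\<bar>)"
proof -
  show dv': "det (Mmat A v' \<theta>) > 0" by (rule compare(1)[OF nnd vpos v'pos dv])
  have 1: "ln (det (Mmat A v \<theta>)) - real CARD('m) * (\<Sum>i\<in>UNIV. \<bar>ln (v'$i / v$i)\<bar>) \<le> ln (det (Mmat A v' \<theta>))"
    by (rule compare_bound[OF nnd vpos v'pos dv])
  have 2: "ln (det (Mmat A v' \<theta>)) - real CARD('m) * (\<Sum>i\<in>UNIV. \<bar>ln (v$i / v'$i)\<bar>) \<le> ln (det (Mmat A v \<theta>))"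
    by (rule compare_bound[OF nnd v'pos vpos dv'])
  have "\<bar>ln (v$i / v'$i)\<bar> = \<bar>ln (v'$i / v$i)\<bar>" for i
    using vpos[of i] v'pos[of i] by (simp add: ln_div)
  thus "\<bar>ln (det (Mmat A v' \<theta>)) - ln (det (Mmat A v \<theta>))\<bar> \<le> real CARD('m) * (\<Sum>i\<in>UNIV. \<bar>ln (v'$i / v$i)\<bar>)"
    using 1 2 by auto
qed



theorem theorem1:
  fixes \<pi> :: "'p measure"
    and A :: "'n::finite \<Rightarrow> 'p \<Rightarrow> real^'m::finite^'m"
    and w w' :: "real^'n" and \<alpha> :: real
  assumes prob: "prob_space \<pi>"
    and meas: "\<And>i. A i \<in> borel_measurable \<pi>"
    and nnd: "\<And>i \<theta>. \<theta> \<in> space \<pi> \<Longrightarrow> nonneg_def_mat (A i \<theta>)"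
    and fin: "\<exists>w0\<in>Omega. phi_finite \<pi> A w0"
    and w_in: "w \<in> Omega" and w'_in: "w' \<in> Omega"
    and upd: "\<And>i. w' $ i = w $ i * (dfun \<pi> A w i - \<alpha>) / (real CARD('m) - \<alpha>)"
    and alpha: "\<alpha> \<le> 1/2 * Min (range (\<lambda>i. dfun \<pi> A w i))"
  shows "phi \<pi> A w' \<ge> phi \<pi> A w \<and> (phi \<pi> A w' = phi \<pi> A w \<longrightarrow> w' = w)"
proof -
  interpret P: prob_space \<pi> by (rule prob)
  define m where "m = real CARD('m)"
  define L where "L v \<theta> = ln (det (Mmat A v \<theta>))" for v \<theta>
  define T where "T v i \<theta> = trace (matrix_inv (Mmat A v \<theta>) ** A i \<theta>)" for v i \<theta>
  obtain w0 where w0: "w0 \<in> Omega" "AE \<theta> in \<pi>. 0 < det (Mmat A w0 \<theta>)" "integrable \<pi> (L w0)"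
    using fin unfolding phi_finite_def L_def[abs_def] by blast
  have pos: "v $ i > 0" if "v \<in> Omega" for v i using that by (simp add: Omega_def)
  have measM: "Mmat A v \<in> borel_measurable \<pi>" for v
  proof -
    have "Mmat A v = (\<lambda>\<theta>. \<Sum>i\<in>UNIV. v $ i *\<^sub>R A i \<theta>)" by (simp add: Mmat_def[abs_def])
    also have "\<dots> \<in> borel_measurable \<pi>"
      by (intro borel_measurable_sum borel_measurable_scaleR borel_measurable_const meas)
    finally show ?thesis .
  qed
  have measL: "L v \<in> borel_measurable \<pi>" for v
    unfolding L_def[abs_def] by (intro borel_measurable_ln meas_det(1) measM)
  have measT: "T v i \<in> borel_measurable \<pi>" for v i
    unfolding T_def[abs_def] by (rule meas_trace_inv[OF measM meas])
  have nndAE: "AE \<theta> in \<pi>. \<forall>i. nonneg_def_mat (A i \<theta>)" using nnd by (intro AE_I2) auto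
  have detAE: "AE \<theta> in \<pi>. 0 < det (Mmat A v \<theta>)" if v: "v \<in> Omega" for v
    using w0(2) nndAE
  proof eventually_elim
    case (elim \<theta>)
    thus ?case using compare_abs(1)[of A \<theta> w0 v] pos[OF w0(1)] pos[OF v] by blast
  qed
  have intL: "integrable \<pi> (L v)" if v: "v \<in> Omega" for v
  proof -
    define K where "K = m * (\<Sum>i\<in>UNIV. \<bar>ln (v$i / w0$i)\<bar>)"
    have "integrable \<pi> (\<lambda>\<theta>. \<bar>L w0 \<theta>\<bar> + K)" using w0(3) by auto
    moreover have "L v \<in> borel_measurable \<pi>" by (rule measL)
    moreover have "AE \<theta> in \<pi>. norm (L v \<theta>) \<le> norm (\<bar>L w0 \<theta>\<bar> + K)"
      using w0(2) nndAE
    proof eventually_elim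
      case (elim \<theta>)
      hence "\<bar>L v \<theta> - L w0 \<theta>\<bar> \<le> K"
        using compare_abs(2)[of A \<theta> w0 v] pos[OF w0(1)] pos[OF v] by (simp add: L_def K_def m_def)
      moreover have "K \<ge> 0" by (simp add: K_def m_def sum_nonneg)
      ultimately show ?case by simp
    qed
    ultimately show ?thesis by (rule Bochner_Integration.integrable_bound)
  qed
  have Tbd: "AE \<theta> in \<pi>. (\<forall>i. v$i * T v i \<theta> \<ge> 0) \<and> (\<Sum>i\<in>UNIV. v$i * T v i \<theta>) = m"
    if v: "v \<in> Omega" for v
    using detAE[OF v] nndAE
  proof eventually_elim
    case (elim \<theta>)
    thus ?case using compare(3,4)[of A \<theta> v v] pos[OF v] by (simp add: T_def m_def)
  qed
  have intT: "integrable \<pi> (T v i)" if v: "v \<in> Omega" for v i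
  proof (rule P.integrable_const_bound)
    show "T v i \<in> borel_measurable \<pi>" by (rule measT)
    show "AE \<theta> in \<pi>. norm (T v i \<theta>) \<le> m / v$i"
      using Tbd[OF v]
    proof eventually_elim
      case (elim \<theta>)
      hence t0: "v$i * T v i \<theta> \<ge> 0" and "v$i * T v i \<theta> \<le> (\<Sum>j\<in>UNIV. v$j * T v j \<theta>)"
        by (auto intro!: member_le_sum)
      hence tm: "v$i * T v i \<theta> \<le> m" using elim by simp
      have vi: "v$i > 0" using pos[OF v] .
      have "T v i \<theta> \<ge> 0" using t0 vi by (simp add: zero_le_mult_iff)
      moreover have "T v i \<theta> \<le> m / v$i" using tm vi by (simp add: field_simps)
      ultimately show ?case by simp
    qed
  qed
  define c where "c i = w$i * ln (w'$i / w$i)" for i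
  define d where "d i = dfun \<pi> A w i" for i
  have dT: "d i = integral\<^sup>L \<pi> (T w i)" for i by (simp add: d_def dfun_def T_def[abs_def])
  have phiL: "phi \<pi> A v = integral\<^sup>L \<pi> (L v)" for v by (simp add: phi_def L_def[abs_def])
  have AEmain: "AE \<theta> in \<pi>. L w \<theta> + (\<Sum>i\<in>UNIV. c i * T w i \<theta>) \<le> L w' \<theta>"
    using detAE[OF w_in] nndAE
  proof eventually_elim
    case (elim \<theta>)
    hence "L w \<theta> + (\<Sum>i\<in>UNIV. w$i * T w i \<theta> * ln (w'$i / w$i)) \<le> L w' \<theta>"
      using compare(2)[of A \<theta> w w'] pos[OF w_in] pos[OF w'_in] by (simp add: L_def T_def)
    moreover have "(\<Sum>i\<in>UNIV. w$i * T w i \<theta> * ln (w'$i / w$i)) = (\<Sum>i\<in>UNIV. c i * T w i \<theta>)"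
      by (simp add: c_def mult_ac)
    ultimately show ?case by simp
  qed
  have int_lhs: "integrable \<pi> (\<lambda>\<theta>. L w \<theta> + (\<Sum>i\<in>UNIV. c i * T w i \<theta>))"
    using intL[OF w_in] intT[OF w_in] by auto
  have "integral\<^sup>L \<pi> (\<lambda>\<theta>. L w \<theta> + (\<Sum>i\<in>UNIV. c i * T w i \<theta>)) \<le> integral\<^sup>L \<pi> (L w')"
    by (rule integral_mono_AE[OF int_lhs intL[OF w'_in] AEmain])
  moreover have "integral\<^sup>L \<pi> (\<lambda>\<theta>. L w \<theta> + (\<Sum>i\<in>UNIV. c i * T w i \<theta>))
      = integral\<^sup>L \<pi> (L w) + (\<Sum>i\<in>UNIV. c i * d i)"
    using intL[OF w_in] intT[OF w_in] by (simp add: dT)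
  ultimately have main: "phi \<pi> A w + (\<Sum>i\<in>UNIV. c i * d i) \<le> phi \<pi> A w'"
    by (simp add: phiL)
  have "integral\<^sup>L \<pi> (\<lambda>\<theta>. \<Sum>i\<in>UNIV. w$i * T w i \<theta>) = integral\<^sup>L \<pi> (\<lambda>\<theta>. m)"
  proof (rule integral_cong_AE)
    show "(\<lambda>\<theta>. \<Sum>i\<in>UNIV. w$i * T w i \<theta>) \<in> borel_measurable \<pi>"
      using measT by (intro borel_measurable_sum borel_measurable_times borel_measurable_const) auto
    show "(\<lambda>\<theta>. m) \<in> borel_measurable \<pi>" by simp
    show "AE \<theta> in \<pi>. (\<Sum>i\<in>UNIV. w$i * T w i \<theta>) = m" using Tbd[OF w_in] by eventually_elim auto
  qed
  hence swd: "(\<Sum>i\<in>UNIV. w$i * d i) = m"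
    using intT[OF w_in] by (simp add: dT P.prob_space)
  have al: "\<alpha> \<le> d i / 2" for i
  proof -
    have "Min (range (\<lambda>i. dfun \<pi> A w i)) \<le> dfun \<pi> A w i" by (rule Min_le) auto
    thus ?thesis using alpha by (simp add: d_def)
  qed
  have sw: "(\<Sum>i\<in>UNIV. w$i) = 1" and sw': "(\<Sum>i\<in>UNIV. w'$i) = 1"
    using w_in w'_in by (auto simp: Omega_def)
  have mpos: "m > 0" by (simp add: m_def)
  note SF = scalar_final[of "\<lambda>i. w$i" "\<lambda>i. w'$i" d m \<alpha>, OF sw pos[OF w_in] sw' pos[OF w'_in] swd mpos
      upd[unfolded d_def[symmetric] m_def[symmetric]] al]
  have cd: "(\<Sum>i\<in>UNIV. c i * d i) = (\<Sum>i\<in>UNIV. w$i * d i * ln (w'$i / w$i))"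
    by (simp add: c_def mult_ac)
  show ?thesis
  proof
    show "phi \<pi> A w \<le> phi \<pi> A w'" using main SF(1) cd by linarith
    show "phi \<pi> A w' = phi \<pi> A w \<longrightarrow> w' = w"
    proof
      assume "phi \<pi> A w' = phi \<pi> A w"
      hence "(\<Sum>i\<in>UNIV. w$i * d i * ln (w'$i / w$i)) = 0" using main SF(1) cd by linarith
      hence "\<forall>i. w'$i = w$i" by (rule SF(2))
      thus "w' = w" by (simp add: vec_eq_iff)
    qed
  qed
qed


end
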